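(* Let $q$ be a prime power and $f\in\mathbb{F}_q[x]$ monic of degree $m$, and put $M(x)=x^mf(x+x^{-1})$. Suppose $M(x)=(x-1)^2g_1(x)\cdots g_{r-1}(x)$ where the $g_i$ are pairwise different monic irreducible polynomials, none equal to $x\pm1$. Let $M_t(x)=M(x)+tx^m\in\mathbb{F}_q(t)[x]$ with Galois group $H$ over $\mathbb{F}_q(t)$, let its roots be arranged in pairs $\{\alpha_i,\alpha_i^{-1}\}$, $1\le i\le m$, and let $N$ be the kernel of the action of $H$ on these pairs. Then $H/N$ (and hence any subgroup $H_0\le H$ with $H_0\cong H/N$, $H_0\cap N=1$) is isomorphic to the Galois group of $f(x)+t$ over $\mathbb{F}_q(t)$. *)

theory Defs
  imports "HOL-Algebra.Algebraic_Closure_Type" "HOL-Computational_Algebra.Fraction_Field"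
    "HOL-Algebra.Coset"
begin

definition root_set :: "'k::field poly \<Rightarrow> 'k alg_closure set" where
  "root_set p = {x. poly (map_poly to_ac p) x = 0}"

definition base_auts :: "('k::field alg_closure \<Rightarrow> 'k alg_closure) set" where
  "base_auts = {\<sigma>. bij \<sigma> \<and> (\<forall>x y. \<sigma> (x + y) = \<sigma> x + \<sigma> y \<and> \<sigma> (x * y) = \<sigma> x * \<sigma> y)
                    \<and> (\<forall>c. \<sigma> (to_ac c) = to_ac c)}"

text \<open>Galois group of p over the base field, as permutations of the roots of p
  (identity outside the root set), i.e. the restrictions of automorphisms to the roots.\<close>
definition gal_perms :: "'k::field poly \<Rightarrow> ('k alg_closure \<Rightarrow> 'k alg_closure) set" where
  "gal_perms p = (\<lambda>\<sigma> x. if x \<in> root_set p then \<sigma> x else x) ` base_auts"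

definition gal_group :: "'k::field poly \<Rightarrow> ('k alg_closure \<Rightarrow> 'k alg_closure) monoid" where
  "gal_group p = \<lparr>carrier = gal_perms p, monoid.mult = (\<circ>), one = id\<rparr>"

definition root_pairs :: "'k::field poly \<Rightarrow> 'k alg_closure set set" where
  "root_pairs p = {{a, inverse a} | a. a \<in> root_set p}"

definition pair_kernel :: "'k::field poly \<Rightarrow> ('k alg_closure \<Rightarrow> 'k alg_closure) set" where
  "pair_kernel p = {\<sigma> \<in> gal_perms p. \<forall>P \<in> root_pairs p. \<sigma> ` P = P}"

text \<open>M(x) = x^m f(x + 1/x), m = deg f, written out as a polynomial.\<close>
definition recip_M :: "'a::field poly \<Rightarrow> 'a poly" where
  "recip_M f = (\<Sum>i\<le>degree f. smult (coeff f i) ([:1, 0, 1:] ^ i * monom 1 (degree f - i)))"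

text \<open>Embedding F_q[x] into F_q(t)[x] (coefficients as constants) and t itself.\<close>
definition const_poly :: "'a::field poly \<Rightarrow> 'a poly fract poly" where
  "const_poly p = map_poly (\<lambda>c. to_fract [:c:]) p"

definition tvar :: "'a::field poly fract" where
  "tvar = to_fract [:0, 1:]"

end

theory Submission
  imports Defs
begin

definition ishom :: "('a::comm_ring_1 \<Rightarrow> 'b::comm_ring_1) \<Rightarrow> bool" where
  "ishom h \<longleftrightarrow> h 0 = 0 \<and> h 1 = 1 \<and> (\<forall>x y. h (x + y) = h x + h y \<and> h (x * y) = h x * h y)"

lemma ishomD:
  assumes "ishom h"
  shows "h 0 = 0" "h 1 = 1" "h (x + y) = h x + h y" "h (x * y) = h x * h y"
  using assms unfolding ishom_def by auto

lemma ishom_sum: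
  assumes "ishom h"
  shows "h (sum g A) = (\<Sum>i\<in>A. h (g i))"
  by (induction A rule: infinite_finite_induct) (auto simp: ishomD[OF assms])

lemma ishom_power:
  assumes "ishom h"
  shows "h (x ^ n) = h x ^ n"
  by (induction n) (auto simp: ishomD[OF assms])

lemma ishom_minus:
  assumes "ishom h"
  shows "h (- x) = - h x"
proof -
  have "h (x + - x) = 0" using ishomD[OF assms] by simp
  then show ?thesis using ishomD(3)[OF assms, of x "-x"] by (simp add: eq_neg_iff_add_eq_0 add.commute)
qed

lemma map_poly_hom_add:
  assumes "ishom h"
  shows "map_poly h (p + q) = map_poly h p + map_poly h q"
  by (intro poly_eqI) (simp add: coeff_map_poly ishomD[OF assms])

lemma map_poly_hom_mult:
  assumes "ishom h"
  shows "map_poly h (p * q) = map_poly h p * map_poly h q"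
  by (intro poly_eqI) (simp add: coeff_map_poly ishomD[OF assms] coeff_mult ishom_sum[OF assms])

lemma map_poly_hom_sum:
  assumes "ishom h"
  shows "map_poly h (sum g A) = (\<Sum>i\<in>A. map_poly h (g i))"
  by (induction A rule: infinite_finite_induct) (auto simp: ishomD[OF assms] map_poly_hom_add[OF assms])

lemma map_poly_hom_power:
  assumes "ishom h"
  shows "map_poly h (p ^ n) = map_poly h p ^ n"
  by (induction n) (auto simp: ishomD[OF assms] map_poly_hom_mult[OF assms])

lemma poly_map_poly_sum:
  fixes h :: "'a::zero \<Rightarrow> 'b::comm_semiring_1"
  assumes "h 0 = 0"
  shows "poly (map_poly h p) x = (\<Sum>i\<le>degree p. h (coeff p i) * x ^ i)"
proof -
  have "map_poly h p = (\<Sum>i\<le>degree p. monom (coeff (map_poly h p) i) i)"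
    by (rule poly_as_sum_of_monoms'[symmetric]) (rule map_poly_degree_leq)
  then have "poly (map_poly h p) x = poly (\<Sum>i\<le>degree p. monom (coeff (map_poly h p) i) i) x"
    by simp
  also have "\<dots> = (\<Sum>i\<le>degree p. h (coeff p i) * x ^ i)"
    by (simp add: poly_sum poly_monom coeff_map_poly assms)
  finally show ?thesis .
qed

lemma ishom_to_ac: "ishom to_ac"
  unfolding ishom_def by simp

lemma ishom_phi: "ishom (\<lambda>c. to_ac (to_fract [:c:]))"
  unfolding ishom_def by (simp add: pCons_one flip: to_ac_add to_ac_mult to_fract_add to_fract_mult)

lemma base_auts_hom:
  assumes "\<sigma> \<in> base_auts"
  shows "ishom \<sigma>"
proof -
  have "\<sigma> (to_ac 0) = to_ac 0" "\<sigma> (to_ac 1) = to_ac 1" using assms unfolding base_auts_def by blast+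
  then show ?thesis using assms unfolding base_auts_def ishom_def by simp
qed

lemma base_auts_fix: "\<sigma> \<in> base_auts \<Longrightarrow> \<sigma> (to_ac c) = to_ac c"
  unfolding base_auts_def by blast

lemma base_auts_bij: "\<sigma> \<in> base_auts \<Longrightarrow> bij \<sigma>"
  unfolding base_auts_def by blast

lemma base_auts_inverse:
  assumes "\<sigma> \<in> base_auts"
  shows "\<sigma> (inverse x) = inverse (\<sigma> x)"
proof (cases "x = 0")
  case True
  then show ?thesis using ishomD[OF base_auts_hom[OF assms]] by simp
next
  case False
  have "\<sigma> x * \<sigma> (inverse x) = 1"
  proof -
    have "\<sigma> (x * inverse x) = \<sigma> x * \<sigma> (inverse x)" using ishomD(4)[OF base_auts_hom[OF assms]] by blast
    then show ?thesis using ishomD(2)[OF base_auts_hom[OF assms]] False by simp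
  qed
  then show ?thesis by (metis inverse_unique)
qed

lemma base_auts_root:
  assumes "\<sigma> \<in> base_auts" "x \<in> root_set p"
  shows "\<sigma> x \<in> root_set p"
proof -
  have h: "ishom \<sigma>" by (rule base_auts_hom[OF assms(1)])
  have "poly (map_poly to_ac p) x = (\<Sum>i\<le>degree p. to_ac (coeff p i) * x ^ i)"
    by (rule poly_map_poly_sum) simp
  then have "(\<Sum>i\<le>degree p. to_ac (coeff p i) * x ^ i) = 0"
    using assms(2) unfolding root_set_def by simp
  then have "\<sigma> (\<Sum>i\<le>degree p. to_ac (coeff p i) * x ^ i) = 0"
    using ishomD(1)[OF h] by simp
  then have "(\<Sum>i\<le>degree p. to_ac (coeff p i) * \<sigma> x ^ i) = 0"
    by (simp add: ishom_sum[OF h] ishomD[OF h] ishom_power[OF h] base_auts_fix[OF assms(1)])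
  moreover have "poly (map_poly to_ac p) (\<sigma> x) = (\<Sum>i\<le>degree p. to_ac (coeff p i) * \<sigma> x ^ i)"
    by (rule poly_map_poly_sum) simp
  ultimately show ?thesis unfolding root_set_def by simp
qed

lemma base_auts_comp:
  assumes "\<sigma> \<in> base_auts" "\<tau> \<in> base_auts"
  shows "\<sigma> \<circ> \<tau> \<in> base_auts"
  using assms unfolding base_auts_def by (auto intro: bij_comp)

lemma base_auts_id: "id \<in> base_auts"
  unfolding base_auts_def by auto

lemma base_auts_inv:
  assumes "\<sigma> \<in> base_auts"
  shows "inv_into UNIV \<sigma> \<in> base_auts"
proof -
  have b: "bij \<sigma>" using assms by (rule base_auts_bij)
  have h: "ishom \<sigma>" using assms by (rule base_auts_hom)
  have s: "\<sigma> (inv_into UNIV \<sigma> x) = x" for x using b by (simp add: bij_is_surj surj_f_inv_f)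
  have i: "inv_into UNIV \<sigma> (\<sigma> x) = x" for x using b by (simp add: bij_is_inj)
  have "inv_into UNIV \<sigma> (x + y) = inv_into UNIV \<sigma> x + inv_into UNIV \<sigma> y" for x y
    by (metis i s ishomD(3)[OF h])
  moreover have "inv_into UNIV \<sigma> (x * y) = inv_into UNIV \<sigma> x * inv_into UNIV \<sigma> y" for x y
    by (metis i s ishomD(4)[OF h])
  moreover have "inv_into UNIV \<sigma> (to_ac c) = to_ac c" for c
    by (metis i base_auts_fix[OF assms])
  ultimately show ?thesis unfolding base_auts_def using b bij_imp_bij_inv by blast
qed

definition rst :: "'k::field poly \<Rightarrow> ('k alg_closure \<Rightarrow> 'k alg_closure) \<Rightarrow> 'k alg_closure \<Rightarrow> 'k alg_closure" where
  "rst p \<sigma> = (\<lambda>x. if x \<in> root_set p then \<sigma> x else x)"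

lemma gal_perms_rst: "gal_perms p = rst p ` base_auts"
  unfolding gal_perms_def rst_def by simp

lemma rst_comp:
  assumes "\<sigma> \<in> base_auts" "\<tau> \<in> base_auts"
  shows "rst p \<sigma> \<circ> rst p \<tau> = rst p (\<sigma> \<circ> \<tau>)"
  using base_auts_root[OF assms(2)] unfolding rst_def by (auto simp: fun_eq_iff)

lemma rst_inv:
  assumes "\<sigma> \<in> base_auts"
  shows "rst p (inv_into UNIV \<sigma>) \<circ> rst p \<sigma> = id"
proof -
  have "rst p (inv_into UNIV \<sigma>) \<circ> rst p \<sigma> = rst p (inv_into UNIV \<sigma> \<circ> \<sigma>)"
    by (rule rst_comp[OF base_auts_inv[OF assms] assms])
  also have "inv_into UNIV \<sigma> \<circ> \<sigma> = id"
    using base_auts_bij[OF assms] by (simp add: bij_is_inj)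
  finally show ?thesis unfolding rst_def by (auto simp: fun_eq_iff)
qed

lemma group_gal: "group (gal_group p)"
proof (rule groupI)
  show "x \<otimes>\<^bsub>gal_group p\<^esub> y \<in> carrier (gal_group p)"
    if "x \<in> carrier (gal_group p)" "y \<in> carrier (gal_group p)" for x y
    using that unfolding gal_group_def gal_perms_rst
    by (auto simp: rst_comp intro!: imageI base_auts_comp)
  show "\<one>\<^bsub>gal_group p\<^esub> \<in> carrier (gal_group p)"
  proof -
    have "rst p id = id" unfolding rst_def by auto
    then show ?thesis unfolding gal_group_def gal_perms_rst using base_auts_id by (auto intro!: image_eqI[where x=id])
  qed
  show "x \<otimes>\<^bsub>gal_group p\<^esub> y \<otimes>\<^bsub>gal_group p\<^esub> z = x \<otimes>\<^bsub>gal_group p\<^esub> (y \<otimes>\<^bsub>gal_group p\<^esub> z)" for x y z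
    unfolding gal_group_def by (simp add: comp_assoc)
  show "\<one>\<^bsub>gal_group p\<^esub> \<otimes>\<^bsub>gal_group p\<^esub> x = x" for x
    unfolding gal_group_def by simp
  show "\<exists>y\<in>carrier (gal_group p). y \<otimes>\<^bsub>gal_group p\<^esub> x = \<one>\<^bsub>gal_group p\<^esub>"
    if "x \<in> carrier (gal_group p)" for x
  proof -
    from that obtain \<sigma> where s: "\<sigma> \<in> base_auts" "x = rst p \<sigma>"
      unfolding gal_group_def gal_perms_rst by auto
    show ?thesis unfolding gal_group_def gal_perms_rst
      using s rst_inv[OF s(1)] base_auts_inv[OF s(1)] by auto
  qed
qed


definition Mt :: "'a::field poly \<Rightarrow> 'a poly fract poly" where
  "Mt f = const_poly (recip_M f) + monom tvar (degree f)"

definition Ft :: "'a::field poly \<Rightarrow> 'a poly fract poly" where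
  "Ft f = const_poly f + [:tvar:]"

definition phi :: "'a::field \<Rightarrow> 'a poly fract alg_closure" where
  "phi c = to_ac (to_fract [:c:])"

lemma ishom_phi': "ishom phi"
  using ishom_phi unfolding phi_def by simp

lemma map_const_poly: "map_poly to_ac (const_poly p) = map_poly phi p"
  unfolding const_poly_def phi_def by (subst map_poly_map_poly) (auto simp: o_def)

lemma eval_M:
  "poly (map_poly to_ac (Mt f)) a =
     (\<Sum>i\<le>degree f. phi (coeff f i) * ((1 + a^2)^i * a^(degree f - i))) + to_ac tvar * a ^ degree f"
proof -
  have h: "ishom phi" by (rule ishom_phi')
  have q: "map_poly phi [:1, 0, 1:] = [:1, 0, 1:]"
    by (simp add: map_poly_pCons ishomD[OF h])
  have m1: "map_poly phi (monom 1 k) = monom 1 k" for k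
    by (simp add: map_poly_monom ishomD[OF h])
  have "map_poly phi (recip_M f) = (\<Sum>i\<le>degree f. smult (phi (coeff f i)) ([:1, 0, 1:] ^ i * monom 1 (degree f - i)))"
    unfolding recip_M_def
    by (simp add: map_poly_hom_sum[OF h] map_poly_smult ishomD[OF h] map_poly_hom_mult[OF h]
          map_poly_hom_power[OF h] q m1)
  moreover have "poly [:1, 0, 1:] a = 1 + a^2" by (simp add: power2_eq_square)
  ultimately show ?thesis
    unfolding Mt_def
    by (simp add: map_poly_hom_add[OF ishom_to_ac] map_const_poly map_poly_monom poly_sum poly_monom)
qed

lemma eval_F:
  "poly (map_poly to_ac (Ft f)) b = (\<Sum>i\<le>degree f. phi (coeff f i) * b^i) + to_ac tvar"
proof -
  have h: "ishom phi" by (rule ishom_phi')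
  show ?thesis
    unfolding Ft_def
    by (simp add: map_poly_hom_add[OF ishom_to_ac] map_const_poly poly_map_poly_sum ishomD[OF h])
qed


lemma field_aux1:
  fixes a :: "'b::field"
  assumes "a \<noteq> 0" "i \<le> m"
  shows "(1 + a^2)^i * a^(m - i) = a ^ m * (a + inverse a) ^ i"
proof -
  have e: "1 + a^2 = a * (a + inverse a)" using assms(1) by (simp add: distrib_left power2_eq_square add.commute)
  have "(1 + a^2)^i = a^i * (a + inverse a) ^ i"
    unfolding e by (rule power_mult_distrib)
  moreover have "a^i * a^(m - i) = a ^ m" using assms(2) by (simp flip: power_add)
  ultimately show ?thesis by (metis mult.assoc mult.commute)
qed

lemma field_aux2:
  fixes a x :: "'b::field"
  assumes "1 - x * a + a * a = 0"
  shows "a \<noteq> 0 \<and> a + inverse a = x"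
proof -
  have nz: "a \<noteq> 0" using assms by auto
  have "a * (a + inverse a) = a * a + 1" using nz by (simp add: distrib_left)
  also have "\<dots> = a * x"
  proof -
    have "a * a + 1 = (1 - x * a + a * a) + a * x" by (simp add: algebra_simps)
    then show ?thesis using assms by simp
  qed
  finally show ?thesis using nz by simp
qed
lemma sum_zero_pow:
  fixes g :: "nat \<Rightarrow> 'b::field"
  shows "(\<Sum>i\<le>m. g i * ((1 + 0^2)^i * 0^(m-i))) = g m"
proof -
  have "(\<Sum>i\<le>m. g i * ((1 + 0^2)^i * 0^(m-i))) = (\<Sum>i\<le>m. if i = m then g m else 0)"
    by (rule sum.cong) (auto simp: power_0_left)
  then show ?thesis by simp
qed

lemma eval_M_nz:
  assumes "a \<noteq> 0"
  shows "poly (map_poly to_ac (Mt f)) a = a ^ degree f * poly (map_poly to_ac (Ft f)) (a + inverse a)"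
proof -
  have "(\<Sum>i\<le>degree f. phi (coeff f i) * ((1 + a^2)^i * a^(degree f - i)))
      = (\<Sum>i\<le>degree f. a ^ degree f * (phi (coeff f i) * (a + inverse a) ^ i))"
    by (rule sum.cong) (simp_all add: field_aux1[OF assms] mult.left_commute)
  also have "\<dots> = a ^ degree f * (\<Sum>i\<le>degree f. phi (coeff f i) * (a + inverse a) ^ i)"
    by (simp add: sum_distrib_left)
  finally show ?thesis
    unfolding eval_M eval_F by (simp add: distrib_left mult.commute)
qed

lemma one_plus_T: "1 + to_ac (tvar :: 'a::field poly fract) \<noteq> 0"
proof -
  have "1 + tvar = to_fract ([:1, 1:] :: 'a poly)"
    unfolding tvar_def by (simp add: one_pCons flip: to_fract_1 to_fract_add)
  then have "1 + to_ac (tvar :: 'a poly fract) = to_ac (to_fract ([:1, 1:] :: 'a poly))"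
    by (metis to_ac_1 to_ac_add)
  then show ?thesis by simp
qed

lemma eval_M_0:
  assumes "lead_coeff f = 1"
  shows "poly (map_poly to_ac (Mt f)) 0 \<noteq> 0"
proof (cases "degree f = 0")
  case True
  then have "poly (map_poly to_ac (Mt f)) 0 = 1 + to_ac tvar"
    using assms unfolding eval_M by (simp add: phi_def pCons_one)
  then show ?thesis using one_plus_T by simp
next
  case False
  have "(\<Sum>i\<le>degree f. phi (coeff f i) * ((1 + 0^2)^i * (0::'a poly fract alg_closure)^(degree f - i)))
        = phi (lead_coeff f)" by (rule sum_zero_pow)
  then have "poly (map_poly to_ac (Mt f)) 0 = 1"
    using assms False unfolding eval_M by (simp add: phi_def pCons_one)
  then show ?thesis by simp
qed

lemma root_M_iff:
  assumes "lead_coeff f = 1"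
  shows "a \<in> root_set (Mt f) \<longleftrightarrow> a \<noteq> 0 \<and> a + inverse a \<in> root_set (Ft f)"
proof (cases "a = 0")
  case True
  then show ?thesis using eval_M_0[OF assms] unfolding root_set_def by simp
next
  case False
  then show ?thesis using eval_M_nz[OF False, of f] unfolding root_set_def by simp
qed

lemma root_F_ex:
  assumes "lead_coeff f = 1" "x \<in> root_set (Ft f)"
  shows "\<exists>a. a \<in> root_set (Mt f) \<and> a + inverse a = x"
proof -
  define c where "c = (\<lambda>k::nat. if k = 0 then 1 else if k = 1 then - x else (1::'a poly fract alg_closure))"
  have "\<exists>a. (\<Sum>k\<le>2. c k * a ^ k) = 0"
    by (rule alg_closed) (auto simp: c_def)
  then obtain a where a: "(\<Sum>k\<le>2. c k * a ^ k) = 0" by blast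
  have "(\<Sum>k\<le>2. c k * a ^ k) = c 0 * a ^ 0 + c 1 * a ^ 1 + c 2 * a ^ 2"
    by (simp add: numeral_2_eq_2 atMost_Suc)
  then have a': "1 - x * a + a * a = 0"
    using a by (simp add: c_def power2_eq_square)
  from field_aux2[OF a'] have nz: "a \<noteq> 0" and "a + inverse a = x" by auto
  then show ?thesis using root_M_iff[OF assms(1)] nz assms(2) by auto
qed

lemma pair_aux:
  fixes a b :: "'b::field"
  assumes "a \<noteq> 0" "b \<noteq> 0"
  shows "{b, inverse b} = {a, inverse a} \<longleftrightarrow> b + inverse b = a + inverse a"
proof
  assume "{b, inverse b} = {a, inverse a}"
  then show "b + inverse b = a + inverse a"
    by (auto simp: doubleton_eq_iff add.commute)
next
  assume h: "b + inverse b = a + inverse a"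
  have "(b - a) * (1 - inverse (a * b)) = (b + inverse b) - (a + inverse a)"
    using assms by (simp add: field_simps)
  then have "(b - a) * (1 - inverse (a * b)) = 0" using h by simp
  then have "b - a = 0 \<or> 1 - inverse (a * b) = 0" by simp
  then have "b = a \<or> a * b = 1"
    by (metis eq_iff_diff_eq_0 inverse_1 inverse_inverse_eq)
  then have "b = a \<or> b = inverse a"
    using assms by (metis inverse_unique mult.commute)
  then show "{b, inverse b} = {a, inverse a}" by auto
qed

lemma sigma_pair:
  assumes "\<sigma> \<in> base_auts"
  shows "\<sigma> (a + inverse a) = \<sigma> a + inverse (\<sigma> a)"
  using ishomD(3)[OF base_auts_hom[OF assms]] base_auts_inverse[OF assms] by simp

lemma rst_F_eq:
  assumes lc: "lead_coeff f = 1" and s: "\<sigma> \<in> base_auts" "\<tau> \<in> base_auts"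
    and eq: "rst (Mt f) \<sigma> = rst (Mt f) \<tau>"
  shows "rst (Ft f) \<sigma> = rst (Ft f) \<tau>"
proof
  fix x
  show "rst (Ft f) \<sigma> x = rst (Ft f) \<tau> x"
  proof (cases "x \<in> root_set (Ft f)")
    case True
    then obtain a where a: "a \<in> root_set (Mt f)" "a + inverse a = x"
      using root_F_ex[OF lc] by blast
    have "\<sigma> a = \<tau> a" using fun_cong[OF eq, of a] a(1) unfolding rst_def by simp
    then have "\<sigma> x = \<tau> x" using a(2) sigma_pair[OF s(1), of a] sigma_pair[OF s(2), of a] by simp
    then show ?thesis unfolding rst_def by simp
  next
    case False
    then show ?thesis unfolding rst_def by simp
  qed
qed

definition rho :: "'a::field poly \<Rightarrow> ('a poly fract alg_closure \<Rightarrow> 'a poly fract alg_closure)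
     \<Rightarrow> ('a poly fract alg_closure \<Rightarrow> 'a poly fract alg_closure)" where
  "rho f \<pi> = rst (Ft f) (SOME \<sigma>. \<sigma> \<in> base_auts \<and> \<pi> = rst (Mt f) \<sigma>)"

lemma rho_rst:
  assumes lc: "lead_coeff f = 1" and s: "\<sigma> \<in> base_auts"
  shows "rho f (rst (Mt f) \<sigma>) = rst (Ft f) \<sigma>"
proof -
  define \<tau> where "\<tau> = (SOME \<tau>. \<tau> \<in> base_auts \<and> rst (Mt f) \<sigma> = rst (Mt f) \<tau>)"
  have "\<tau> \<in> base_auts \<and> rst (Mt f) \<sigma> = rst (Mt f) \<tau>"
    unfolding \<tau>_def by (rule someI[of _ \<sigma>]) (use s in simp)
  then have "rst (Ft f) \<tau> = rst (Ft f) \<sigma>"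
    using rst_F_eq[OF lc] s by metis
  then show ?thesis unfolding rho_def \<tau>_def by simp
qed

lemma rho_hom:
  assumes lc: "lead_coeff f = 1"
  shows "rho f \<in> hom (gal_group (Mt f)) (gal_group (Ft f))"
proof (rule homI)
  fix \<pi> assume "\<pi> \<in> carrier (gal_group (Mt f))"
  then obtain \<sigma> where s: "\<sigma> \<in> base_auts" "\<pi> = rst (Mt f) \<sigma>"
    unfolding gal_group_def gal_perms_rst by auto
  then show "rho f \<pi> \<in> carrier (gal_group (Ft f))"
    using rho_rst[OF lc s(1)] unfolding gal_group_def gal_perms_rst by auto
next
  fix \<pi> \<pi>' assume "\<pi> \<in> carrier (gal_group (Mt f))" "\<pi>' \<in> carrier (gal_group (Mt f))"
  then obtain \<sigma> \<tau> where s: "\<sigma> \<in> base_auts" "\<pi> = rst (Mt f) \<sigma>" "\<tau> \<in> base_auts" "\<pi>' = rst (Mt f) \<tau>"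
    unfolding gal_group_def gal_perms_rst by auto
  have "rho f (\<pi> \<circ> \<pi>') = rho f (rst (Mt f) (\<sigma> \<circ> \<tau>))"
    using s rst_comp by metis
  also have "\<dots> = rst (Ft f) (\<sigma> \<circ> \<tau>)"
    using rho_rst[OF lc base_auts_comp[OF s(1,3)]] .
  also have "\<dots> = rho f \<pi> \<circ> rho f \<pi>'"
    using s rho_rst[OF lc] rst_comp by metis
  finally show "rho f (\<pi> \<otimes>\<^bsub>gal_group (Mt f)\<^esub> \<pi>') = rho f \<pi> \<otimes>\<^bsub>gal_group (Ft f)\<^esub> rho f \<pi>'"
    unfolding gal_group_def by simp
qed

lemma rho_surj:
  assumes lc: "lead_coeff f = 1"
  shows "rho f ` carrier (gal_group (Mt f)) = carrier (gal_group (Ft f))"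
  unfolding gal_group_def gal_perms_rst using rho_rst[OF lc] by (auto simp: image_image)

lemma inverse_root:
  assumes lc: "lead_coeff f = 1" and "a \<in> root_set (Mt f)"
  shows "inverse a \<in> root_set (Mt f)"
  using assms root_M_iff[OF lc] by (simp add: add.commute)

lemma kernel_char:
  assumes lc: "lead_coeff f = 1" and s: "\<sigma> \<in> base_auts"
  shows "rst (Ft f) \<sigma> = id \<longleftrightarrow>
    (\<forall>a \<in> root_set (Mt f). rst (Mt f) \<sigma> ` {a, inverse a} = {a, inverse a})"
proof -
  have img: "rst (Mt f) \<sigma> ` {a, inverse a} = {\<sigma> a, inverse (\<sigma> a)}" if "a \<in> root_set (Mt f)" for a
    by (simp add: rst_def inverse_root[OF lc that] base_auts_inverse[OF s] that)
  have nz: "a \<noteq> 0" "\<sigma> a \<noteq> 0" if "a \<in> root_set (Mt f)" for a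
    using that base_auts_root[OF s that] root_M_iff[OF lc] by auto
  have "rst (Ft f) \<sigma> = id \<longleftrightarrow> (\<forall>x \<in> root_set (Ft f). \<sigma> x = x)"
    unfolding rst_def by (auto simp: fun_eq_iff)
  also have "\<dots> \<longleftrightarrow> (\<forall>a \<in> root_set (Mt f). \<sigma> a + inverse (\<sigma> a) = a + inverse a)"
  proof
    assume h: "\<forall>x \<in> root_set (Ft f). \<sigma> x = x"
    show "\<forall>a \<in> root_set (Mt f). \<sigma> a + inverse (\<sigma> a) = a + inverse a"
    proof
      fix a assume "a \<in> root_set (Mt f)"
      then have "a + inverse a \<in> root_set (Ft f)" using root_M_iff[OF lc] by auto
      then show "\<sigma> a + inverse (\<sigma> a) = a + inverse a" using h sigma_pair[OF s] by metis
    qed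
  next
    assume h: "\<forall>a \<in> root_set (Mt f). \<sigma> a + inverse (\<sigma> a) = a + inverse a"
    show "\<forall>x \<in> root_set (Ft f). \<sigma> x = x"
    proof
      fix x assume "x \<in> root_set (Ft f)"
      then obtain a where "a \<in> root_set (Mt f)" "a + inverse a = x"
        using root_F_ex[OF lc] by blast
      then show "\<sigma> x = x" using h sigma_pair[OF s] by metis
    qed
  qed
  also have "\<dots> \<longleftrightarrow> (\<forall>a \<in> root_set (Mt f). rst (Mt f) \<sigma> ` {a, inverse a} = {a, inverse a})"
  proof (intro ball_cong refl)
    fix a assume a: "a \<in> root_set (Mt f)"
    show "(\<sigma> a + inverse (\<sigma> a) = a + inverse a) = (rst (Mt f) \<sigma> ` {a, inverse a} = {a, inverse a})"
      by (simp only: img[OF a] pair_aux[OF nz(1)[OF a] nz(2)[OF a]])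
  qed
  finally show ?thesis .
qed

lemma kernel_eq:
  assumes lc: "lead_coeff f = 1"
  shows "kernel (gal_group (Mt f)) (gal_group (Ft f)) (rho f) = pair_kernel (Mt f)"
proof -
  have "rho f \<pi> = id \<longleftrightarrow> (\<forall>P\<in>root_pairs (Mt f). \<pi> ` P = P)" if pi: "\<pi> \<in> gal_perms (Mt f)" for \<pi>
  proof -
    obtain \<sigma> where s: "\<sigma> \<in> base_auts" "\<pi> = rst (Mt f) \<sigma>"
      using pi unfolding gal_perms_rst by auto
    show ?thesis
      using kernel_char[OF lc s(1)] rho_rst[OF lc s(1)] s(2) unfolding root_pairs_def by auto
  qed
  then show ?thesis
    unfolding kernel_def pair_kernel_def by (auto simp: gal_group_def)
qed


theorem lemma5p4:
  fixes f :: "'a::{field,finite} poly"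
    and G :: "'a poly set"
  assumes "lead_coeff f = 1"
    and "finite G"
    and "recip_M f = [:-1, 1:] ^ 2 * (\<Prod>g\<in>G. g)"
    and "\<forall>g\<in>G. lead_coeff g = 1 \<and> irreducible g \<and> g \<noteq> [:-1, 1:] \<and> g \<noteq> [:1, 1:]"
  defines "H \<equiv> gal_group (const_poly (recip_M f) + monom tvar (degree f))"
    and "N \<equiv> pair_kernel (const_poly (recip_M f) + monom tvar (degree f))"
  shows "H Mod N \<cong> gal_group (const_poly f + [:tvar:])
     \<and> (\<forall>H0. subgroup H0 H \<longrightarrow> H0 \<inter> N = {id} \<longrightarrow> H\<lparr>carrier := H0\<rparr> \<cong> H Mod N
            \<longrightarrow> H\<lparr>carrier := H0\<rparr> \<cong> gal_group (const_poly f + [:tvar:]))"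
proof -
  have HM: "H = gal_group (Mt f)" by (simp add: H_def Mt_def)
  have NM: "N = pair_kernel (Mt f)" by (simp add: N_def Mt_def)
  have FF: "const_poly f + [:tvar:] = Ft f" by (simp add: Ft_def)
  interpret gh: group_hom "gal_group (Mt f)" "gal_group (Ft f)" "rho f"
    using group_gal rho_hom[OF assms(1)] by (simp add: group_hom_def group_hom_axioms_def group_gal)
  have iso: "gal_group (Mt f) Mod pair_kernel (Mt f) \<cong> gal_group (Ft f)"
    using gh.FactGroup_iso[OF rho_surj[OF assms(1)]] kernel_eq[OF assms(1)] by simp
  show ?thesis unfolding HM NM FF using iso iso_trans by blast
qed

end
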